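(* Let $0\le\gamma<1$ and $\beta>0$, and let $f\in\mathcal{B}(\Omega_\gamma)$ have the expansion $f(z)=\sum_{n=0}^\infty a_n\left(z+\frac{\gamma}{1-\gamma}\right)^n$ in $\Omega_\gamma$. Then $$\sum_{n=0}^\infty \frac{|a_n|}{(n+\beta)(1-\gamma)^n}\rho^n\le\frac{1}{\beta}\qquad\text{for all }\rho\in[0,\rho_1],$$ where $\rho_1=\rho_1(\beta)$ is the unique root in $(0,1)$ of the equation $$\frac{1}{\beta}-2\sum_{n=1}^\infty\frac{\rho^n}{n+\beta}=0.$$ The number $\rho_1$ is best possible: for every $\rho\in(\rho_1,1)$ there exists $f\in\mathcal{B}(\Omega_\gamma)$ for which the left-hand side exceeds $1/\beta$.
   Context: For $\gamma\in[0,1)$, $\Omega_\gamma=\left\{z\in\mathbb{C}:\left|z+\frac{\gamma}{1-\gamma}\right|<\frac{1}{1-\gamma}\right\}$, the open disk with center $-\frac{\gamma}{1-\gamma}$ and radius $\frac{1}{1-\gamma}$. It contains the unit disk $\mathbb{D}$. The class $\mathcal{B}(\Omega_\gamma)$ consists of all analytic functions $f$ on $\Omega_\gamma$ with $|f|\le 1$ on $\Omega_\gamma$. The parameter $\rho\in[0,1)$ plays the role of $|\gamma+(1-\gamma)z|$ for $z\in\Omega_\gamma$. *)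

theory Defs
  imports "HOL-Analysis.Analysis"
begin

definition Omega :: "real \<Rightarrow> complex set" where
  "Omega \<gamma> = ball (- complex_of_real (\<gamma> / (1 - \<gamma>))) (1 / (1 - \<gamma>))"

definition boundedB :: "real \<Rightarrow> (complex \<Rightarrow> complex) \<Rightarrow> bool" where
  "boundedB \<gamma> f \<longleftrightarrow> f holomorphic_on Omega \<gamma> \<and> (\<forall>z\<in>Omega \<gamma>. norm (f z) \<le> 1)"

definition has_expansion :: "real \<Rightarrow> (complex \<Rightarrow> complex) \<Rightarrow> (nat \<Rightarrow> complex) \<Rightarrow> bool" where
  "has_expansion \<gamma> f a \<longleftrightarrow>
     (\<forall>z\<in>Omega \<gamma>. (\<lambda>n. a n * (z + complex_of_real (\<gamma> / (1 - \<gamma>))) ^ n) sums f z)"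

definition rho_eq :: "real \<Rightarrow> real \<Rightarrow> real" where
  "rho_eq \<beta> \<rho> = 1 / \<beta> - 2 * (\<Sum>n. \<rho> ^ (Suc n) / (real (Suc n) + \<beta>))"

definition lhs_sum :: "real \<Rightarrow> real \<Rightarrow> (nat \<Rightarrow> complex) \<Rightarrow> real \<Rightarrow> real" where
  "lhs_sum \<gamma> \<beta> a \<rho> = (\<Sum>n. norm (a n) / ((real n + \<beta>) * (1 - \<gamma>) ^ n) * \<rho> ^ n)"

end

theory Submission
  imports Defs "HOL-Complex_Analysis.Complex_Analysis"
begin


lemma mobius_le:
  fixes z b :: complex
  assumes "norm z \<le> 1" "norm b < 1"
  shows "norm (z - b) \<le> norm (1 - cnj b * z)"
proof -
  have e: "norm (1 - cnj b * z)^2 - norm (z - b)^2 = (1 - norm b^2) * (1 - norm z^2)"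
    unfolding cmod_power2 by (simp add: algebra_simps power2_eq_square)
  have "norm z ^ 2 \<le> 1" using assms(1) by (intro power_le_one) auto
  moreover have "norm b ^ 2 \<le> 1" using assms(2) by (intro power_le_one) auto
  ultimately have "(1 - norm b^2) * (1 - norm z^2) \<ge> 0"
    by (intro mult_nonneg_nonneg) linarith+
  then have "norm (z - b)^2 \<le> norm (1 - cnj b * z)^2" using e by linarith
  then show ?thesis by (rule power2_le_imp_le) simp
qed


lemma root_pow_eq_1:
  assumes "n \<ge> 1"
  shows "cis (2 * pi / real n) ^ m = 1 \<longleftrightarrow> n dvd m"
proof
  assume "cis (2 * pi / real n) ^ m = 1"
  then have "Re (cis (2 * pi / real n) ^ m) = 1" by simp
  then have "cos (real m * (2 * pi / real n)) = 1"
    by (simp only: cos_n_Re_cis_pow_n)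
  then obtain k :: int where k: "real m * (2 * pi / real n) = real_of_int k * 2 * pi"
    using cos_one_2pi_int by blast
  then have "real m = real n * real_of_int k" using assms by (simp add: field_simps)
  then have "int m = int n * k" by (metis of_int_eq_iff of_int_mult of_int_of_nat_eq)
  then show "n dvd m" by (metis dvd_triv_left int_dvd_int_iff)
next
  assume "n dvd m"
  then obtain k where "m = n * k" by blast
  have "cis (2 * pi / real n) ^ m = cis (real m * (2 * pi / real n))"
    by (rule Complex.DeMoivre)
  also have "\<dots> = cis (2 * pi * real k)"
    using assms \<open>m = n * k\<close> by (simp add: field_simps)
  also have "\<dots> = 1" by (simp add: cis_multiple_2pi)
  finally show "cis (2 * pi / real n) ^ m = 1" .
qed

lemma root_sum:
  assumes "n \<ge> 1"
  shows "(\<Sum>k<n. (cis (2 * pi / real n) ^ m) ^ k) = (if n dvd m then of_nat n else 0)"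
proof (cases "n dvd m")
  case True
  then have "cis (2 * pi / real n) ^ m = 1" using root_pow_eq_1[OF assms] by simp
  then show ?thesis using True by simp
next
  case False
  let ?q = "cis (2 * pi / real n) ^ m"
  have "?q \<noteq> 1" using False root_pow_eq_1[OF assms] by simp
  moreover have "?q ^ n = 1"
    by (metis power_mult[symmetric] mult.commute root_pow_eq_1[OF assms] dvd_triv_left power_mult)
  ultimately show ?thesis using False by (simp add: geometric_sum)
qed

lemma limit_le:
  fixes x :: real
  assumes "\<And>r. 0 < r \<Longrightarrow> r < 1 \<Longrightarrow> x * r ^ n \<le> 1"
  shows "x \<le> 1"
proof -
  have "((\<lambda>r. x * r ^ n) \<longlongrightarrow> x * 1 ^ n) (at_left (1::real))"
    by (intro tendsto_intros)
  moreover have "eventually (\<lambda>r. r \<in> {0<..<1}) (at_left (1::real))"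
    by (rule eventually_at_left_real) simp
  then have "eventually (\<lambda>r. x * r ^ n \<le> 1) (at_left (1::real))"
    by (rule eventually_mono) (auto intro: assms)
  ultimately show ?thesis
    using tendsto_le[OF trivial_limit_at_left_real, of "\<lambda>_. 1" 1] by simp
qed



lemma wiener_core:
  fixes b :: "nat \<Rightarrow> complex" and g :: "complex \<Rightarrow> complex"
  assumes sums: "\<And>w. norm w < 1 \<Longrightarrow> (\<lambda>m. b m * w^m) sums g w"
    and bnd: "\<And>w. norm w < 1 \<Longrightarrow> norm (g w) \<le> 1"
    and n: "n \<ge> 1" and a: "norm (b 0) < 1"
  shows "norm (b n) \<le> 1 - norm (b 0)^2"
proof -
  define \<omega> where "\<omega> = cis (2*pi/real n)"
  define d where "d m = (if n dvd m then b m else 0)" for m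
  define h where "h w = (\<Sum>k<n. g (\<omega>^k * w)) / of_nat n" for w
  have normw: "norm (\<omega>^k) = 1" for k by (simp add: \<omega>_def norm_power)
  have hsums: "(\<lambda>m. d m * w^m) sums h w" if w: "norm w < 1" for w
  proof -
    have "(\<lambda>m. \<Sum>k<n. b m * (\<omega>^k * w)^m) sums (\<Sum>k<n. g (\<omega>^k * w))"
      by (intro sums_sum sums) (simp add: norm_mult normw w)
    then have "(\<lambda>m. (\<Sum>k<n. b m * (\<omega>^k * w)^m) / of_nat n) sums h w"
      unfolding h_def by (rule sums_divide)
    moreover have "(\<Sum>k<n. b m * (\<omega>^k * w)^m) / of_nat n = d m * w^m" for m
    proof -
      have eqk: "b m * (\<omega>^k * w)^m = b m * w^m * (\<omega>^m)^k" for k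
      proof -
        have "(\<omega>^k)^m = (\<omega>^m)^k" by (simp add: power_mult[symmetric] mult.commute)
        then show ?thesis by (simp add: power_mult_distrib)
      qed
      have "(\<Sum>k<n. b m * (\<omega>^k * w)^m) = b m * w^m * (\<Sum>k<n. (\<omega>^m)^k)"
        unfolding sum_distrib_left by (rule sum.cong[OF refl]) (rule eqk)
      also have "\<dots> = b m * w^m * (if n dvd m then of_nat n else 0)"
        unfolding \<omega>_def using root_sum[OF n] by simp
      finally show ?thesis using n by (simp add: d_def)
    qed
    ultimately show ?thesis by simp
  qed
  have hbnd: "norm (h w) \<le> 1" if w: "norm w < 1" for w
  proof -
    have "norm (\<Sum>k<n. g (\<omega>^k * w)) \<le> (\<Sum>k<n. 1)"
      by (intro sum_norm_le bnd) (simp add: norm_mult normw w)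
    then show ?thesis using n by (simp add: h_def norm_divide)
  qed
  have h0: "h 0 = b 0"
    using sums_unique2[OF hsums[of 0] powser_sums_zero] by (simp add: d_def)
  define c where "c m = d (m + n)" for m
  have csums: "(\<lambda>m. c m * w^m) sums ((h w - b 0) / w^n)" if w: "norm w < 1" "w \<noteq> 0" for w
  proof -
    have "(\<Sum>i<n. d i * w^i) = (\<Sum>i<n. if i = 0 then b 0 else 0)"
    proof (intro sum.cong refl)
      fix i assume "i \<in> {..<n}"
      then show "d i * w^i = (if i = 0 then b 0 else 0)"
        by (auto simp: d_def dest: dvd_imp_le)
    qed
    also have "\<dots> = b 0" using n by simp
    finally have s: "(\<Sum>i<n. d i * w^i) = b 0" .
    have "(\<lambda>i. d (i + n) * w^(i+n)) sums (h w - b 0)"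
      by (subst sums_iff_shift) (use hsums[OF w(1)] s in simp)
    then have "(\<lambda>i. d (i + n) * w^(i+n) / w^n) sums ((h w - b 0) / w^n)"
      by (rule sums_divide)
    moreover have "d (i + n) * w^(i+n) / w^n = c i * w^i" for i
      using w by (simp add: c_def power_add)
    ultimately show ?thesis by simp
  qed
  have summ: "summable (\<lambda>m. c m * w^m)" if w: "norm w < 1" for w
  proof (cases "w = 0")
    case True then show ?thesis using powser_sums_zero[of c] by (auto simp: sums_iff)
  next
    case False then show ?thesis using csums[OF w False] by (auto simp: sums_iff)
  qed
  define P where "P w = (\<Sum>m. c m * w^m)" for w
  have P0: "P 0 = b n"
    using sums_unique[OF powser_sums_zero[of c]] by (simp add: P_def c_def d_def)
  have hP: "h w = b 0 + w^n * P w" if w: "norm w < 1" for w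
  proof (cases "w = 0")
    case True then show ?thesis using h0 n by simp
  next
    case False
    have "P w = (h w - b 0) / w^n"
      unfolding P_def using sums_unique[OF csums[OF w False]] by simp
    then show ?thesis using False by simp
  qed
  have PH: "P holomorphic_on ball 0 1"
  proof -
    have "\<exists>f'. DERIV P x :> f'" if "x \<in> ball 0 1" for x
      unfolding P_def using that termdiffs_strong'[of 1 c x] summ by auto
    then show ?thesis by (subst holomorphic_on_open) auto
  qed
  define Q where "Q w = P w / (1 - cnj (b 0) * (b 0 + w^n * P w))" for w
  have den: "1 - cnj (b 0) * (b 0 + w^n * P w) \<noteq> 0" if w: "norm w < 1" for w
  proof -
    have "norm (cnj (b 0) * (b 0 + w^n * P w)) \<le> norm (b 0) * 1"
      unfolding norm_mult hP[OF w, symmetric] complex_mod_cnj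
      by (intro mult_left_mono hbnd w) simp
    then show ?thesis using a by auto
  qed
  have QH: "Q holomorphic_on ball 0 1"
    unfolding Q_def by (intro holomorphic_intros PH) (use den in auto)
  have Qbnd: "norm (Q 0) * r^n \<le> 1" if r: "0 < r" "r < 1" for r
  proof -
    have "norm ((deriv ^^ 0) Q 0) \<le> (fact 0) * (1 / r^n) / r^0"
    proof (rule Cauchy_inequality)
      show "Q holomorphic_on ball 0 r" using r by (intro holomorphic_on_subset[OF QH]) auto
      show "continuous_on (cball 0 r) Q"
        using r by (intro continuous_on_subset[OF holomorphic_on_imp_continuous_on[OF QH]]) auto
      show "0 < r" by fact
      fix x :: complex assume "norm (0 - x) = r"
      then have x: "norm x = r" by simp
      then have x1: "norm x < 1" and x0: "x \<noteq> 0" using r by auto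
      have "x^n * Q x = (h x - b 0) / (1 - cnj (b 0) * h x)"
        unfolding Q_def hP[OF x1] by simp
      then have "norm (x^n * Q x) = norm (h x - b 0) / norm (1 - cnj (b 0) * h x)"
        by (simp add: norm_divide)
      also have "\<dots> \<le> 1"
        using mobius_le[OF hbnd[OF x1] a] by (simp add: divide_le_eq_1)
      finally have "r^n * norm (Q x) \<le> 1" by (simp add: norm_mult norm_power x)
      then show "norm (Q x) \<le> 1 / r^n" using r by (simp add: field_simps)
    qed
    then show ?thesis using r by (simp add: field_simps)
  qed
  have "norm (Q 0) \<le> 1" by (rule limit_le) (rule Qbnd)
  moreover have "Q 0 = b n / of_real (1 - norm (b 0)^2)"
  proof -
    have z: "(0::complex)^n = 0" using n by simp
    have e: "cnj (b 0) * b 0 = of_real (norm (b 0)^2)"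
      by (subst complex_norm_square) (simp add: mult.commute)
    show ?thesis unfolding Q_def P0 z by (simp add: e)
  qed
  moreover have pos: "1 - norm (b 0)^2 > 0"
    using a by (simp add: abs_square_less_1)
  ultimately have "norm (b n) / (1 - norm (b 0)^2) \<le> 1"
    by (simp only: norm_divide norm_of_real abs_of_pos)
  then show ?thesis using pos by (simp add: field_simps)
qed



definition SS :: "real \<Rightarrow> real \<Rightarrow> real" where
  "SS \<beta> \<rho> = (\<Sum>n. \<rho> ^ (Suc n) / (real (Suc n) + \<beta>))"

lemma rho_eq_SS: "rho_eq \<beta> \<rho> = 1 / \<beta> - 2 * SS \<beta> \<rho>"
  by (simp add: rho_eq_def SS_def)

lemma SS_summable:
  assumes "\<beta> > 0" "0 \<le> \<rho>" "\<rho> < 1"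
  shows "summable (\<lambda>n. \<rho> ^ (Suc n) / (real (Suc n) + \<beta>))"
proof (rule summable_comparison_test[OF _ summable_geometric[of \<rho>]])
  show "\<exists>N. \<forall>n\<ge>N. norm (\<rho> ^ Suc n / (real (Suc n) + \<beta>)) \<le> \<rho> ^ n"
  proof (intro exI allI impI)
    fix n :: nat
    have "\<rho> ^ Suc n / (real (Suc n) + \<beta>) \<le> \<rho> ^ Suc n / 1"
      using assms by (intro divide_left_mono) auto
    also have "\<dots> \<le> \<rho> ^ n" using assms by (simp add: mult_left_le_one_le)
    finally show "norm (\<rho> ^ Suc n / (real (Suc n) + \<beta>)) \<le> \<rho> ^ n"
      using assms by simp
  qed
qed (use assms in simp)

lemma SS_strict_mono:
  assumes "\<beta> > 0" "0 \<le> \<rho>" "\<rho> < \<sigma>" "\<sigma> < 1"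
  shows "SS \<beta> \<rho> < SS \<beta> \<sigma>"
proof -
  have s1: "summable (\<lambda>n. \<rho> ^ (Suc n) / (real (Suc n) + \<beta>))"
    using assms by (intro SS_summable) auto
  have s2: "summable (\<lambda>n. \<sigma> ^ (Suc n) / (real (Suc n) + \<beta>))"
    using assms by (intro SS_summable) auto
  have "0 < (\<Sum>n. \<sigma> ^ (Suc n) / (real (Suc n) + \<beta>) - \<rho> ^ (Suc n) / (real (Suc n) + \<beta>))"
  proof (rule suminf_pos)
    show "summable (\<lambda>n. \<sigma> ^ (Suc n) / (real (Suc n) + \<beta>) - \<rho> ^ (Suc n) / (real (Suc n) + \<beta>))"
      by (rule summable_diff[OF s2 s1])
    fix n
    have "\<rho> ^ Suc n < \<sigma> ^ Suc n" using assms by (intro power_strict_mono) auto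
    then show "0 < \<sigma> ^ (Suc n) / (real (Suc n) + \<beta>) - \<rho> ^ (Suc n) / (real (Suc n) + \<beta>)"
      using assms by (simp add: divide_strict_right_mono)
  qed
  also have "\<dots> = SS \<beta> \<sigma> - SS \<beta> \<rho>"
    unfolding SS_def by (rule suminf_diff[OF s2 s1, symmetric])
  finally show ?thesis by simp
qed

lemma SS_mono:
  assumes "\<beta> > 0" "0 \<le> \<rho>" "\<rho> \<le> \<sigma>" "\<sigma> < 1"
  shows "SS \<beta> \<rho> \<le> SS \<beta> \<sigma>"
  using SS_strict_mono[of \<beta> \<rho> \<sigma>] assms by (cases "\<rho> = \<sigma>") auto

lemma SS_0: "SS \<beta> 0 = 0"
  by (simp add: SS_def)

lemma SS_cont:
  assumes "\<beta> > 0" "0 \<le> \<rho>" "\<rho> < 1"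
  shows "isCont (SS \<beta>) \<rho>"
proof -
  define c where "c n = 1 / (real (Suc n) + \<beta>)" for n
  define K where "K = (1 + \<rho>) / 2"
  have K: "0 \<le> K" "K < 1" "\<rho> < K" using assms by (auto simp: K_def)
  have sK: "summable (\<lambda>n. c n * K ^ n)"
  proof -
    have "summable (\<lambda>n. K ^ (Suc n) / (real (Suc n) + \<beta>))"
      using K assms by (intro SS_summable) auto
    then have "summable (\<lambda>n. K ^ (Suc n) / (real (Suc n) + \<beta>) / K)"
      by (rule summable_divide)
    moreover have "K ^ (Suc n) / (real (Suc n) + \<beta>) / K = c n * K ^ n" for n
    proof -
      have "K \<noteq> 0" "real (Suc n) + \<beta> \<noteq> 0" using K(3) assms by auto
      then show ?thesis unfolding c_def power_Suc
        by (metis (no_types, lifting) div_by_1 divide_divide_eq_left divide_divide_eq_right mult.commute nonzero_divide_mult_cancel_left times_divide_eq_left)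
    qed
    ultimately show ?thesis by simp
  qed
  have eq: "SS \<beta> x = x * (\<Sum>n. c n * x ^ n)" if "\<bar>x\<bar> < K" for x
  proof -
    have "summable (\<lambda>n. c n * x ^ n)"
      using powser_inside[OF sK] that K by simp
    then have "(\<lambda>n. x * (c n * x ^ n)) sums (x * (\<Sum>n. c n * x ^ n))"
      by (intro sums_mult summable_sums)
    moreover have "x * (c n * x ^ n) = x ^ (Suc n) / (real (Suc n) + \<beta>)" for n
      by (simp add: c_def)
    ultimately show ?thesis unfolding SS_def by (simp add: sums_iff)
  qed
  have c1: "isCont (\<lambda>x. x * (\<Sum>n. c n * x ^ n)) \<rho>"
    using isCont_powser[OF sK] K assms by (intro continuous_intros) auto
  have ev: "eventually (\<lambda>x. x * (\<Sum>n. c n * x ^ n) = SS \<beta> x) (nhds \<rho>)"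
  proof -
    have "open {x. \<bar>x\<bar> < K}" by (intro open_Collect_less continuous_intros)
    moreover have "\<rho> \<in> {x. \<bar>x\<bar> < K}" using K assms by auto
    ultimately show ?thesis
      by (rule eventually_nhds_in_open[THEN eventually_mono]) (simp add: eq)
  qed
  show ?thesis using isCont_cong[OF ev] c1 by simp
qed



lemma SS_large:
  assumes "\<beta> > 0"
  shows "\<exists>\<rho>. 0 < \<rho> \<and> \<rho> < 1 \<and> SS \<beta> \<rho> > 1 / (2 * \<beta>)"
proof -
  have ns: "\<not> summable (\<lambda>n. 1 / (real (Suc n) + \<beta>))"
  proof
    assume "summable (\<lambda>n. 1 / (real (Suc n) + \<beta>))"
    then have "summable (\<lambda>n. (1 + \<beta>) * (1 / (real (Suc n) + \<beta>)))"
      by (rule summable_mult)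
    then have "summable (\<lambda>n. inverse (real (Suc n)))"
    proof (rule summable_comparison_test[rotated], intro exI allI impI)
      fix n :: nat
      have "real (Suc n) + \<beta> \<le> (1 + \<beta>) * real (Suc n)"
        using assms by (simp add: algebra_simps)
      then have "1 / real (Suc n) \<le> (1 + \<beta>) / (real (Suc n) + \<beta>)"
        using assms by (simp add: field_simps)
      then show "norm (inverse (real (Suc n))) \<le> (1 + \<beta>) * (1 / (real (Suc n) + \<beta>))"
        by (simp add: inverse_eq_divide)
    qed
    then have "summable (\<lambda>n. inverse (real n))"
      using summable_Suc_iff[of "\<lambda>n. inverse (real n)"] by simp
    then show False using not_summable_harmonic[where 'a=real] by simp
  qed
  have "\<exists>N. (\<Sum>i<N. 1 / (real (Suc i) + \<beta>)) > 1 / (2 * \<beta>)"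
  proof (rule ccontr)
    assume "\<not> ?thesis"
    then have "\<And>N. (\<Sum>i<N. 1 / (real (Suc i) + \<beta>)) \<le> 1 / (2 * \<beta>)" by (simp add: not_less)
    then have "summable (\<lambda>n. 1 / (real (Suc n) + \<beta>))"
      using assms by (intro summableI_nonneg_bounded) auto
    with ns show False by simp
  qed
  then obtain N where N: "(\<Sum>i<N. 1 / (real (Suc i) + \<beta>)) > 1 / (2 * \<beta>)" by blast
  define F where "F \<rho> = (\<Sum>i<N. \<rho> ^ (Suc i) / (real (Suc i) + \<beta>))" for \<rho> :: real
  have d: "\<And>i. 1 + real i + \<beta> \<noteq> 0" using assms by (smt (verit) of_nat_0_le_iff)
  have "(F \<longlongrightarrow> F 1) (at_left 1)"
    unfolding F_def by (intro tendsto_intros) (auto simp: d)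
  moreover have "F 1 > 1 / (2 * \<beta>)" using N by (simp add: F_def)
  ultimately have "eventually (\<lambda>\<rho>. F \<rho> > 1 / (2 * \<beta>)) (at_left 1)"
    by (rule order_tendstoD(1))
  moreover have "eventually (\<lambda>\<rho>. \<rho> \<in> {0<..<1}) (at_left (1::real))"
    by (rule eventually_at_left_real) simp
  ultimately have "eventually (\<lambda>\<rho>. F \<rho> > 1 / (2 * \<beta>) \<and> \<rho> \<in> {0<..<1}) (at_left (1::real))"
    by (rule eventually_conj)
  then obtain \<rho> where r: "F \<rho> > 1 / (2 * \<beta>)" "\<rho> \<in> {0<..<1}"
    using eventually_happens'[OF trivial_limit_at_left_real] by blast
  have "F \<rho> \<le> SS \<beta> \<rho>"
    unfolding F_def SS_def using r assms
    by (intro sum_le_suminf SS_summable) auto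
  then show ?thesis using r by auto
qed

lemma root_exists_unique:
  assumes "\<beta> > 0"
  shows "\<exists>!\<rho>1. \<rho>1 \<in> {0<..<1} \<and> rho_eq \<beta> \<rho>1 = 0"
proof -
  obtain r where r: "0 < r" "r < 1" "SS \<beta> r > 1 / (2 * \<beta>)"
    using SS_large[OF assms] by blast
  have "\<exists>x. 0 \<le> x \<and> x \<le> r \<and> SS \<beta> x = 1 / (2 * \<beta>)"
  proof (rule IVT')
    show "SS \<beta> 0 \<le> 1 / (2 * \<beta>)" using assms by (simp add: SS_0)
    show "1 / (2 * \<beta>) \<le> SS \<beta> r" using r by simp
    show "0 \<le> r" using r by simp
    show "continuous_on {0..r} (SS \<beta>)"
      using r assms by (intro continuous_at_imp_continuous_on ballI SS_cont) auto
  qed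
  then obtain x where x: "0 \<le> x" "x \<le> r" "SS \<beta> x = 1 / (2 * \<beta>)" by blast
  have "x \<noteq> 0" using x assms by (auto simp: SS_0)
  then have ex: "x \<in> {0<..<1} \<and> rho_eq \<beta> x = 0"
    using x r assms by (auto simp: rho_eq_SS)
  show ?thesis
  proof (rule ex1I[of _ x])
    show "x \<in> {0<..<1} \<and> rho_eq \<beta> x = 0" by (rule ex)
  next
    fix y assume y: "y \<in> {0<..<1} \<and> rho_eq \<beta> y = 0"
    have "SS \<beta> y = 1 / (2 * \<beta>)" using y assms by (auto simp: rho_eq_SS field_simps)
    then have "SS \<beta> y = SS \<beta> x" using x by simp
    then show "y = x"
      using SS_strict_mono[of \<beta> x y] SS_strict_mono[of \<beta> y x] y ex assms
      by (cases x y rule: linorder_cases) auto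
  qed
qed



lemma b0_le:
  fixes b :: "nat \<Rightarrow> complex"
  assumes sums: "\<And>w. norm w < 1 \<Longrightarrow> (\<lambda>m. b m * w^m) sums g w"
    and bnd: "\<And>w. norm w < 1 \<Longrightarrow> norm (g w) \<le> 1"
  shows "norm (b 0) \<le> 1"
proof -
  have "g 0 = b 0" using sums_unique2[OF sums[of 0] powser_sums_zero] by simp
  then show ?thesis using bnd[of 0] by simp
qed

lemma wiener:
  fixes b :: "nat \<Rightarrow> complex" and g :: "complex \<Rightarrow> complex"
  assumes sums: "\<And>w. norm w < 1 \<Longrightarrow> (\<lambda>m. b m * w^m) sums g w"
    and bnd: "\<And>w. norm w < 1 \<Longrightarrow> norm (g w) \<le> 1"
    and n: "n \<ge> 1"
  shows "norm (b n) \<le> 1 - norm (b 0)^2"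
proof (cases "norm (b 0) < 1")
  case True
  then show ?thesis using wiener_core[OF sums bnd n] by blast
next
  case False
  then have b0: "norm (b 0) = 1" using b0_le[OF sums bnd] by simp
  have key: "t * norm (b n) \<le> 1 - t^2" if t: "0 < t" "t < 1" for t
  proof -
    have "norm (of_real t * b n) \<le> 1 - norm (of_real t * b 0)^2"
    proof (rule wiener_core[where g = "\<lambda>w. of_real t * g w"])
      fix w :: complex assume w: "norm w < 1"
      show "(\<lambda>m. of_real t * b m * w^m) sums (of_real t * g w)"
        using sums_mult[OF sums[OF w], of "of_real t"] by (simp add: mult.assoc)
      have "norm (of_real t * g w) = t * norm (g w)" using t by (simp add: norm_mult)
      also have "\<dots> \<le> t * 1" using t bnd[OF w] by (intro mult_left_mono) auto
      finally show "norm (of_real t * g w) \<le> 1" using t by simp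
    next
      show "1 \<le> n" by fact
      show "norm (of_real t * b 0) < 1" using t b0 by (simp add: norm_mult)
    qed
    then show ?thesis using t b0 by (simp add: norm_mult)
  qed
  have lim: "((\<lambda>t. t * norm (b n) + t^2) \<longlongrightarrow> 1 * norm (b n) + 1^2) (at_left (1::real))"
    by (intro tendsto_intros)
  have "eventually (\<lambda>t. t \<in> {0<..<1}) (at_left (1::real))"
    by (rule eventually_at_left_real) simp
  then have ev: "eventually (\<lambda>t. t * norm (b n) + t^2 \<le> 1) (at_left (1::real))"
    by (rule eventually_mono) (use key in force)
  have "1 * norm (b n) + 1^2 \<le> 1"
    using tendsto_le[OF trivial_limit_at_left_real tendsto_const lim ev] .
  then show ?thesis using b0 by simp
qed

lemma term_summable:
  fixes b :: "nat \<Rightarrow> complex"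
  assumes "\<And>n. norm (b n) \<le> 1" "\<beta> > 0" "0 \<le> \<rho>" "\<rho> < 1"
  shows "summable (\<lambda>n. norm (b n) / (real n + \<beta>) * \<rho>^n)"
proof (rule summable_comparison_test[OF _ summable_divide[OF summable_geometric[of \<rho>], of \<beta>]])
  show "\<exists>N. \<forall>n\<ge>N. norm (norm (b n) / (real n + \<beta>) * \<rho> ^ n) \<le> \<rho> ^ n / \<beta>"
  proof (intro exI allI impI)
    fix n :: nat
    have "norm (b n) / (real n + \<beta>) \<le> 1 / \<beta>"
      using assms by (intro frac_le) auto
    then have "norm (b n) / (real n + \<beta>) * \<rho> ^ n \<le> 1 / \<beta> * \<rho> ^ n"
      using assms by (intro mult_right_mono) auto
    then show "norm (norm (b n) / (real n + \<beta>) * \<rho> ^ n) \<le> \<rho> ^ n / \<beta>"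
      using assms by simp
  qed
qed (use assms in simp)

lemma lhs_sum_alt:
  assumes "\<gamma> < 1"
  shows "lhs_sum \<gamma> \<beta> a \<rho> = (\<Sum>n. norm (a n / of_real ((1-\<gamma>)^n)) / (real n + \<beta>) * \<rho>^n)"
proof -
  have "norm (a n) / ((real n + \<beta>) * (1 - \<gamma>) ^ n) * \<rho> ^ n =
        norm (a n / of_real ((1-\<gamma>)^n)) / (real n + \<beta>) * \<rho>^n" for n
  proof -
    have e: "norm (complex_of_real ((1-\<gamma>)^n)) = (1-\<gamma>)^n"
      using assms by (simp only: norm_of_real) simp
    show ?thesis unfolding norm_divide e by simp
  qed
  then show ?thesis unfolding lhs_sum_def by simp
qed



lemma upper:
  assumes g: "0 \<le> \<gamma>" "\<gamma> < 1" and bt: "\<beta> > 0"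
    and r1: "SS \<beta> \<rho>1 = 1 / (2 * \<beta>)" "\<rho>1 < 1" and r: "0 \<le> \<rho>" "\<rho> \<le> \<rho>1"
    and f: "boundedB \<gamma> f" "has_expansion \<gamma> f a"
  shows "lhs_sum \<gamma> \<beta> a \<rho> \<le> 1 / \<beta>"
proof -
  define b where "b m = a m / of_real ((1-\<gamma>)^m)" for m
  define g where "g w = f ((w - of_real \<gamma>) / of_real (1-\<gamma>))" for w
  have g1: "1 - \<gamma> > 0" using g by simp
  have zO: "(w - of_real \<gamma>) / of_real (1-\<gamma>) \<in> Omega \<gamma>"
   and zz: "(w - of_real \<gamma>) / of_real (1-\<gamma>) + of_real (\<gamma> / (1 - \<gamma>)) = w / of_real (1-\<gamma>)"
    if w: "norm w < 1" for w
  proof -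
    have ne: "complex_of_real (1 - \<gamma>) \<noteq> 0" using g1 by (metis of_real_eq_0_iff less_irrefl)
    show e: "(w - of_real \<gamma>) / of_real (1-\<gamma>) + of_real (\<gamma> / (1 - \<gamma>)) = w / of_real (1-\<gamma>)"
      unfolding of_real_divide by (simp add: diff_divide_distrib)
    have "dist (- complex_of_real (\<gamma> / (1 - \<gamma>))) ((w - of_real \<gamma>) / of_real (1-\<gamma>))
        = norm ((w - of_real \<gamma>) / of_real (1-\<gamma>) + of_real (\<gamma> / (1 - \<gamma>)))"
    proof -
      have "\<And>C Z :: complex. - C - Z = -(Z + C)" by simp
      then show ?thesis by (simp only: dist_norm norm_minus_cancel)
    qed
    also have "\<dots> = norm w / (1 - \<gamma>)" unfolding e norm_divide norm_of_real using g1 by simp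
    also have "\<dots> < 1 / (1 - \<gamma>)" using w g1 by (simp add: divide_strict_right_mono)
    finally show "(w - of_real \<gamma>) / of_real (1-\<gamma>) \<in> Omega \<gamma>"
      unfolding Omega_def by simp
  qed
  have gsums: "(\<lambda>m. b m * w^m) sums g w" if w: "norm w < 1" for w
  proof -
    have "(\<lambda>m. a m * ((w - of_real \<gamma>) / of_real (1-\<gamma>) + of_real (\<gamma> / (1 - \<gamma>))) ^ m)
            sums f ((w - of_real \<gamma>) / of_real (1-\<gamma>))"
      using f(2) zO[OF w] unfolding has_expansion_def by blast
    then show ?thesis unfolding zz[OF w] g_def b_def by (simp add: power_divide)
  qed
  have gbnd: "norm (g w) \<le> 1" if w: "norm w < 1" for w
    using f(1) zO[OF w] unfolding boundedB_def g_def by blast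
  define A where "A = norm (b 0)"
  have A: "0 \<le> A" "A \<le> 1" using b0_le[OF gsums gbnd] by (auto simp: A_def)
  have bn: "norm (b n) \<le> 1 - A^2" if "n \<ge> 1" for n
    using wiener[OF gsums gbnd that] by (simp add: A_def)
  have b1: "norm (b n) \<le> 1" for n
  proof (cases "n = 0")
    case True then show ?thesis using A by (simp add: A_def)
  next
    case False
    have "A^2 \<ge> 0" by simp
    then show ?thesis using bn[of n] False by linarith
  qed
  have rr: "\<rho> < 1" using r r1 by simp
  have L: "lhs_sum \<gamma> \<beta> a \<rho> = (\<Sum>n. norm (b n) / (real n + \<beta>) * \<rho>^n)"
    unfolding lhs_sum_alt[OF g(2)] b_def ..
  define u where "u n = (if n = 0 then A / \<beta> else (1 - A^2) * (\<rho> ^ n / (real n + \<beta>)))" for n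
  have tu: "norm (b n) / (real n + \<beta>) * \<rho>^n \<le> u n" for n
  proof (cases "n = 0")
    case True then show ?thesis by (simp add: u_def A_def)
  next
    case False
    have "norm (b n) / (real n + \<beta>) \<le> (1 - A^2) / (real n + \<beta>)"
      using bn[of n] False bt by (intro divide_right_mono) auto
    then have "norm (b n) / (real n + \<beta>) * \<rho>^n \<le> (1 - A^2) / (real n + \<beta>) * \<rho>^n"
      using r by (intro mult_right_mono) auto
    then show ?thesis using False by (simp add: u_def)
  qed
  have s1: "(\<lambda>n. norm (b n) / (real n + \<beta>) * \<rho>^n) sums lhs_sum \<gamma> \<beta> a \<rho>"
    unfolding L using b1 bt r rr by (intro summable_sums term_summable) auto
  have "(\<lambda>n. (1 - A^2) * (\<rho> ^ (Suc n) / (real (Suc n) + \<beta>))) sums ((1 - A^2) * SS \<beta> \<rho>)"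
    unfolding SS_def using bt r rr by (intro sums_mult summable_sums SS_summable) auto
  then have "(\<lambda>n. u (Suc n)) sums ((1 - A^2) * SS \<beta> \<rho>)" by (simp add: u_def)
  then have s2: "u sums ((1 - A^2) * SS \<beta> \<rho> + A / \<beta>)"
    by (subst (asm) sums_Suc_iff) (simp add: u_def)
  have "lhs_sum \<gamma> \<beta> a \<rho> \<le> (1 - A^2) * SS \<beta> \<rho> + A / \<beta>"
    by (rule sums_le[OF tu s1 s2])
  also have "(1 - A^2) * SS \<beta> \<rho> \<le> (1 - A^2) * SS \<beta> \<rho>1"
    using A bt r rr r1 by (intro mult_left_mono SS_mono) (auto simp: power_le_one)
  also have "(1 - A^2) * SS \<beta> \<rho>1 + A / \<beta> \<le> 1 / \<beta>"
  proof -
    have "1 / \<beta> - ((1 - A^2) * SS \<beta> \<rho>1 + A / \<beta>) = (1 - A)^2 / (2 * \<beta>)"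
      using bt unfolding r1 by (simp add: field_simps power2_eq_square)
    moreover have "(1 - A)^2 / (2 * \<beta>) \<ge> 0" using bt by simp
    ultimately show ?thesis by linarith
  qed
  finally show ?thesis by simp
qed



lemma sharp:
  assumes g: "0 \<le> \<gamma>" "\<gamma> < 1" and bt: "\<beta> > 0"
    and r1: "SS \<beta> \<rho>1 = 1 / (2 * \<beta>)" "0 < \<rho>1" and r: "\<rho>1 < \<rho>" "\<rho> < 1"
  shows "\<exists>f a. boundedB \<gamma> f \<and> has_expansion \<gamma> f a \<and> lhs_sum \<gamma> \<beta> a \<rho> > 1 / \<beta>"
proof -
  define v where "v i = \<rho> ^ (Suc i) / (real (Suc i) + \<beta>)" for i
  have "SS \<beta> \<rho> > 1 / (2 * \<beta>)" using SS_strict_mono[of \<beta> \<rho>1 \<rho>] r r1 bt by simp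
  moreover have "(\<lambda>N. \<Sum>i<N. v i) \<longlonglongrightarrow> SS \<beta> \<rho>"
    unfolding SS_def v_def using bt r r1 by (intro summable_LIMSEQ SS_summable) auto
  ultimately have "eventually (\<lambda>N. (\<Sum>i<N. v i) > 1 / (2 * \<beta>)) sequentially"
    by (intro order_tendstoD(1))
  then obtain N where N: "(\<Sum>i<N. v i) > 1 / (2 * \<beta>)"
    using eventually_happens'[OF sequentially_bot] by blast
  define F where "F t = (1 + t) * (\<Sum>i<N. t ^ i * v i)" for t :: real
  have "(F \<longlongrightarrow> (1 + 1) * (\<Sum>i<N. 1 ^ i * v i)) (at_left 1)"
    unfolding F_def by (intro tendsto_intros)
  moreover have "(1 + 1) * (\<Sum>i<N. 1 ^ i * v i) > 1 / \<beta>"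
    using N bt by (simp add: field_simps)
  ultimately have "eventually (\<lambda>t. F t > 1 / \<beta>) (at_left 1)"
    by (rule order_tendstoD(1))
  moreover have "eventually (\<lambda>t. t \<in> {0<..<1}) (at_left (1::real))"
    by (rule eventually_at_left_real) simp
  ultimately have "eventually (\<lambda>t. F t > 1 / \<beta> \<and> t \<in> {0<..<1}) (at_left (1::real))"
    by (rule eventually_conj)
  then obtain t where t: "F t > 1 / \<beta>" "0 < t" "t < 1"
    using eventually_happens'[OF trivial_limit_at_left_real] by force
  define br where "br n = (case n of 0 \<Rightarrow> t | Suc m \<Rightarrow> - ((1 - t^2) * t^m))" for n
  define b where "b n = complex_of_real (br n)" for n
  define g where "g w = (complex_of_real t - w) / (1 - complex_of_real t * w)" for w
  have tw: "norm (complex_of_real t * w) < 1" if w: "norm w < 1" for w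
  proof -
    have "t * norm w \<le> 1 * norm w" using t by (intro mult_right_mono) auto
    then show ?thesis using w t by (simp add: norm_mult)
  qed
  have den: "1 - complex_of_real t * w \<noteq> 0" if w: "norm w < 1" for w
    using tw[OF w] by auto
  have bsums: "(\<lambda>n. b n * w^n) sums g w" if w: "norm w < 1" for w
  proof -
    have "norm (complex_of_real t * w) < 1" by (rule tw[OF w])
    then have "(\<lambda>m. (complex_of_real t * w)^m) sums (1 / (1 - complex_of_real t * w))"
      by (rule geometric_sums)
    then have sm: "(\<lambda>m. (- complex_of_real (1 - t^2) * w) * (complex_of_real t * w)^m) sums
                 ((- complex_of_real (1 - t^2) * w) * (1 / (1 - complex_of_real t * w)))"
      by (rule sums_mult)
    have eqm: "(- complex_of_real (1 - t^2) * w) * (complex_of_real t * w)^m = b (Suc m) * w ^ (Suc m)" for m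
      by (simp add: b_def br_def power_mult_distrib algebra_simps)
    from sm have "(\<lambda>m. b (Suc m) * w ^ (Suc m)) sums ((- complex_of_real (1 - t^2) * w) * (1 / (1 - complex_of_real t * w)))"
      unfolding eqm .
    then have "(\<lambda>n. b n * w^n) sums ((- complex_of_real (1 - t^2) * w) * (1 / (1 - complex_of_real t * w)) + b 0 * w ^ 0)"
      by (subst (asm) sums_Suc_iff)
    moreover have "(- complex_of_real (1 - t^2) * w) * (1 / (1 - complex_of_real t * w)) + b 0 * w ^ 0 = g w"
      using den[OF w] by (simp add: b_def br_def g_def field_simps power2_eq_square)
    ultimately show ?thesis by simp
  qed
  define f where "f z = g (complex_of_real \<gamma> + complex_of_real (1 - \<gamma>) * z)" for z
  define a where "a n = b n * complex_of_real ((1 - \<gamma>)^n)" for n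
  have g1: "1 - \<gamma> > 0" using g by simp
  have wz: "complex_of_real \<gamma> + complex_of_real (1 - \<gamma>) * z = complex_of_real (1 - \<gamma>) * (z + complex_of_real (\<gamma> / (1 - \<gamma>)))" for z
    using g1 by (simp add: field_simps of_real_divide)
  have wn: "norm (complex_of_real \<gamma> + complex_of_real (1 - \<gamma>) * z) < 1" if z: "z \<in> Omega \<gamma>" for z
  proof -
    have "norm (z + complex_of_real (\<gamma> / (1 - \<gamma>))) < 1 / (1 - \<gamma>)"
    proof -
      have "\<And>C Z :: complex. - C - Z = -(Z + C)" by simp
      then show ?thesis using z unfolding Omega_def mem_ball by (simp only: dist_norm norm_minus_cancel)
    qed
    then have h1: "(1 - \<gamma>) * norm (z + complex_of_real (\<gamma> / (1 - \<gamma>))) < 1"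
      using g1 by (simp add: field_simps)
    have e: "norm (complex_of_real (1-\<gamma>)) = 1-\<gamma>"
      using g1 by (metis norm_of_real abs_of_pos)
    show ?thesis unfolding wz norm_mult e by (rule h1)
  qed
  have fexp: "has_expansion \<gamma> f a"
    unfolding has_expansion_def
  proof
    fix z assume z: "z \<in> Omega \<gamma>"
    have "(\<lambda>n. b n * (complex_of_real \<gamma> + complex_of_real (1 - \<gamma>) * z)^n) sums f z"
      unfolding f_def by (rule bsums[OF wn[OF z]])
    then show "(\<lambda>n. a n * (z + complex_of_real (\<gamma> / (1 - \<gamma>))) ^ n) sums f z"
      unfolding wz a_def by (simp add: power_mult_distrib mult_ac)
  qed
  have fB: "boundedB \<gamma> f"
    unfolding boundedB_def
  proof
    show "f holomorphic_on Omega \<gamma>"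
      unfolding f_def g_def by (intro holomorphic_intros) (use den wn in auto)
    show "\<forall>z\<in>Omega \<gamma>. norm (f z) \<le> 1"
    proof
      fix z assume z: "z \<in> Omega \<gamma>"
      define w where "w = complex_of_real \<gamma> + complex_of_real (1 - \<gamma>) * z"
      have w: "norm w < 1" using wn[OF z] by (simp add: w_def)
      have "norm (w - complex_of_real t) \<le> norm (1 - cnj (complex_of_real t) * w)"
        using w t by (intro mobius_le) auto
      then have "norm (complex_of_real t - w) \<le> norm (1 - complex_of_real t * w)"
        by (simp add: norm_minus_commute)
      then show "norm (f z) \<le> 1"
        using den[OF w] unfolding f_def w_def[symmetric] g_def by (simp add: norm_divide divide_le_eq_1)
    qed
  qed
  have ab: "a n / complex_of_real ((1 - \<gamma>)^n) = b n" for n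
    using g1 by (simp add: a_def)
  have brle: "\<bar>br n\<bar> \<le> 1" for n
  proof (cases n)
    case 0 then show ?thesis using t by (simp add: br_def)
  next
    case (Suc m)
    have "0 \<le> (1 - t^2) * t^m" using t by (simp add: power_le_one abs_square_le_1)
    moreover have "(1 - t^2) * t^m \<le> 1 * 1"
      using t by (intro mult_mono) (auto simp: power_le_one)
    ultimately show ?thesis using Suc by (simp add: br_def)
  qed
  have bnorm: "norm (b n) = \<bar>br n\<bar>" for n by (simp add: b_def)
  have L: "lhs_sum \<gamma> \<beta> a \<rho> = (\<Sum>n. norm (b n) / (real n + \<beta>) * \<rho>^n)"
    unfolding lhs_sum_alt[OF g(2)] ab ..
  have summ: "summable (\<lambda>n. norm (b n) / (real n + \<beta>) * \<rho>^n)"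
    using bt r r1 brle by (intro term_summable) (auto simp: bnorm)
  have "(\<Sum>n<Suc N. norm (b n) / (real n + \<beta>) * \<rho>^n) \<le> lhs_sum \<gamma> \<beta> a \<rho>"
    unfolding L using summ bt r r1 by (intro sum_le_suminf) auto
  moreover have "(\<Sum>n<Suc N. norm (b n) / (real n + \<beta>) * \<rho>^n) = t / \<beta> + (1 - t^2) * (\<Sum>i<N. t ^ i * v i)"
  proof -
    have "(\<Sum>n<Suc N. norm (b n) / (real n + \<beta>) * \<rho>^n) =
           norm (b 0) / (real 0 + \<beta>) * \<rho>^0 + (\<Sum>i<N. norm (b (Suc i)) / (real (Suc i) + \<beta>) * \<rho>^(Suc i))"
      by (rule sum.lessThan_Suc_shift)
    also have "norm (b 0) / (real 0 + \<beta>) * \<rho>^0 = t / \<beta>" using t by (simp add: bnorm br_def)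
    also have "(\<Sum>i<N. norm (b (Suc i)) / (real (Suc i) + \<beta>) * \<rho>^(Suc i)) = (1 - t^2) * (\<Sum>i<N. t ^ i * v i)"
      unfolding sum_distrib_left
    proof (rule sum.cong[OF refl])
      fix i
      have "0 \<le> (1 - t^2) * t^i" using t by (simp add: power_le_one abs_square_le_1)
      then show "norm (b (Suc i)) / (real (Suc i) + \<beta>) * \<rho>^(Suc i) = (1 - t^2) * (t ^ i * v i)"
        by (simp add: bnorm br_def v_def)
    qed
    finally show ?thesis .
  qed
  moreover have "t / \<beta> + (1 - t^2) * (\<Sum>i<N. t ^ i * v i) > 1 / \<beta>"
  proof -
    define Y where "Y = (\<Sum>i<N. t ^ i * v i)"
    have hY: "(1 + t) * Y > 1 / \<beta>" using t(1) by (simp add: F_def Y_def)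
    have "(1 - t) * ((1 + t) * Y) > (1 - t) * (1 / \<beta>)"
      using mult_strict_left_mono[OF hY, of "1 - t"] t by simp
    then have "(1 - t^2) * Y > (1 - t) / \<beta>" by (simp add: algebra_simps power2_eq_square)
    moreover have "t / \<beta> + (1 - t) / \<beta> = 1 / \<beta>" by (simp add: add_divide_distrib[symmetric])
    ultimately show ?thesis unfolding Y_def by linarith
  qed
  ultimately show ?thesis using fB fexp by force
qed


theorem theorem2:
  fixes \<gamma> \<beta> :: real
  assumes "0 \<le> \<gamma>" "\<gamma> < 1" "\<beta> > 0"
  shows "(\<exists>!\<rho>1. \<rho>1 \<in> {0<..<1} \<and> rho_eq \<beta> \<rho>1 = 0) \<and>
    (\<forall>\<rho>1. \<rho>1 \<in> {0<..<1} \<and> rho_eq \<beta> \<rho>1 = 0 \<longrightarrow>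
       (\<forall>f a. boundedB \<gamma> f \<and> has_expansion \<gamma> f a \<longrightarrow>
          (\<forall>\<rho>\<in>{0..\<rho>1}. lhs_sum \<gamma> \<beta> a \<rho> \<le> 1 / \<beta>)) \<and>
       (\<forall>\<rho>\<in>{\<rho>1<..<1}. \<exists>f a. boundedB \<gamma> f \<and> has_expansion \<gamma> f a \<and>
          lhs_sum \<gamma> \<beta> a \<rho> > 1 / \<beta>))"
proof (intro conjI allI impI ballI)
  show "\<exists>!\<rho>1. \<rho>1 \<in> {0<..<1} \<and> rho_eq \<beta> \<rho>1 = 0"
    by (rule root_exists_unique[OF assms(3)])
next
  fix \<rho>1 f a \<rho>
  assume r1: "\<rho>1 \<in> {0<..<1} \<and> rho_eq \<beta> \<rho>1 = 0"
    and fa: "boundedB \<gamma> f \<and> has_expansion \<gamma> f a" and r: "\<rho> \<in> {0..\<rho>1}"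
  have S: "SS \<beta> \<rho>1 = 1 / (2 * \<beta>)" using r1 assms by (auto simp: rho_eq_SS field_simps)
  show "lhs_sum \<gamma> \<beta> a \<rho> \<le> 1 / \<beta>"
    using upper[OF assms S] r1 r fa by auto
next
  fix \<rho>1 \<rho>
  assume r1: "\<rho>1 \<in> {0<..<1} \<and> rho_eq \<beta> \<rho>1 = 0" and r: "\<rho> \<in> {\<rho>1<..<1}"
  have S: "SS \<beta> \<rho>1 = 1 / (2 * \<beta>)" using r1 assms by (auto simp: rho_eq_SS field_simps)
  show "\<exists>f a. boundedB \<gamma> f \<and> has_expansion \<gamma> f a \<and> lhs_sum \<gamma> \<beta> a \<rho> > 1 / \<beta>"
    using sharp[OF assms S] r1 r by auto
qed

end
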